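(* If $q=p^n$ is odd, then $E_{(q-3)/2}(x)+E_{(q-1)/2}(x)\equiv(x-2)^{(q-1)/2}\pmod p$ as polynomials in $\mathbb Z[x]$.
   Context: $E_k\in\mathbb Z[x]$ (Dickson polynomials of the second kind) are defined by $E_0=1$, $E_1=x$, $E_{k+2}=xE_{k+1}-E_k$. *)

theory Defs
  imports "HOL-Computational_Algebra.Polynomial" "HOL-Computational_Algebra.Primes"
    "HOL-Number_Theory.Cong"
begin

fun dicksonE :: "nat \<Rightarrow> int poly" where
  "dicksonE 0 = 1"
| "dicksonE (Suc 0) = [:0, 1:]"
| "dicksonE (Suc (Suc k)) = [:0, 1:] * dicksonE (Suc k) - dicksonE k"

end

theory Submission
  imports Defs "HOL-Computational_Algebra.Formal_Laurent_Series"
begin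

definition TT :: "int fls" where "TT = fls_X + fls_X_inv"

definition phi :: "int poly \<Rightarrow> int fls" where "phi f = poly (map_poly of_int f) TT"

lemma phi_0[simp]: "phi 0 = 0" by (simp add: phi_def)

lemma phi_pCons[simp]: "phi (pCons a f) = of_int a + TT * phi f"
  by (simp add: phi_def map_poly_pCons)

lemma phi_add[simp]: "phi (f + g) = phi f + phi g"
  by (induction f g rule: poly_induct2) (simp_all add: algebra_simps)

lemma phi_smult: "phi (smult a g) = of_int a * phi g"
  by (induction g) (simp_all add: algebra_simps)

lemma phi_mult[simp]: "phi (f * g) = phi f * phi g"
  by (induction f) (simp_all add: phi_smult algebra_simps)

lemma phi_uminus[simp]: "phi (- f) = - phi f"
  using phi_smult[of "-1" f] by simp

lemma phi_diff[simp]: "phi (f - g) = phi f - phi g"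
  using phi_add[of f "-g"] by simp

lemma phi_1[simp]: "phi 1 = 1"
  by (simp add: one_pCons)

lemma phi_x[simp]: "phi [:0,1:] = TT" by simp

lemma phi_const[simp]: "phi [:c:] = of_int c" by simp

lemma phi_power[simp]: "phi (f ^ k) = phi f ^ k"
  by (induction k) simp_all

lemma XY: "fls_X * fls_X_inv = (1::int fls)"
  by (simp add: fls_X_times_conv_shift)

lemma XYk: "fls_X ^ k * fls_X_inv ^ k = (1::int fls)"
  by (simp add: XY flip: power_mult_distrib)

lemma TT_nth: "fls_nth (TT * F) j = fls_nth F (j - 1) + fls_nth F (j + 1)"
  by (simp add: TT_def distrib_right fls_X_times_conv_shift fls_X_inv_times_conv_shift)

lemma YX: "fls_X_inv * fls_X = (1::int fls)"
  using XY by (simp add: mult.commute)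
lemma XaY: "fls_X_inv * fls_X ^ Suc j = (fls_X ^ j :: int fls)"
proof -
  have "fls_X_inv * fls_X ^ Suc j = (fls_X_inv * fls_X) * (fls_X ^ j :: int fls)"
    by (simp only: power_Suc mult.assoc)
  then show ?thesis by (simp only: YX mult_1_left)
qed
lemma XbY: "fls_X * fls_X_inv ^ Suc j = (fls_X_inv ^ j :: int fls)"
proof -
  have "fls_X * fls_X_inv ^ Suc j = (fls_X * fls_X_inv) * (fls_X_inv ^ j :: int fls)"
    by (simp only: power_Suc mult.assoc)
  then show ?thesis by (simp only: XY mult_1_left)
qed

lemma dickson_phi: "(fls_X - fls_X_inv) * phi (dicksonE k) = fls_X ^ (k+1) - fls_X_inv ^ (k+1)"
proof (induction k rule: dicksonE.induct)
  case 1
  then show ?case by simp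
next
  case 2
  have "(fls_X - fls_X_inv) * TT = fls_X * fls_X - fls_X_inv * (fls_X_inv::int fls)"
    unfolding TT_def by (simp add: ring_distribs mult.commute)
  then show ?case by (simp add: power2_eq_square)
next
  case (3 k)
  have "(fls_X - fls_X_inv) * phi (dicksonE (Suc (Suc k)))
     = TT * ((fls_X - fls_X_inv) * phi (dicksonE (Suc k))) - (fls_X - fls_X_inv) * phi (dicksonE k)"
    by (simp add: right_diff_distrib mult.left_commute)
  also have "\<dots> = TT * (fls_X ^ Suc (Suc k) - fls_X_inv ^ Suc (Suc k)) - (fls_X ^ (Suc k) - fls_X_inv ^ (Suc k))"
    using 3 by simp
  also have "TT * (fls_X ^ Suc (Suc k) - fls_X_inv ^ Suc (Suc k)) = 
      fls_X * fls_X ^ Suc (Suc k) + fls_X_inv * fls_X ^ Suc (Suc k)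
     - fls_X * fls_X_inv ^ Suc (Suc k) - fls_X_inv * fls_X_inv ^ Suc (Suc k)"
    unfolding TT_def by (simp add: ring_distribs)
  also have "\<dots> = fls_X ^ Suc (Suc (Suc k)) + fls_X ^ Suc k - fls_X_inv ^ Suc k - fls_X_inv ^ Suc (Suc (Suc k))"
    by (simp only: XaY XbY power_Suc[symmetric])
  finally show ?case by (simp add: numeral_eq_Suc)
qed

lemma phi_top:
  "(\<forall>j. int (degree f) < j \<longrightarrow> fls_nth (phi f) j = 0) \<and> fls_nth (phi f) (int (degree f)) = lead_coeff f"
proof (induction f)
  case 0
  then show ?case by simp
next
  case (pCons a f)
  show ?case
  proof (cases "f = 0")
    case True
    then show ?thesis by (simp add: fls_of_int_nth)
  next
    case False
    then have d: "degree (pCons a f) = degree f + 1" by simp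
    have nth: "fls_nth (phi (pCons a f)) j = (if j = 0 then a else 0) + fls_nth (phi f) (j - 1) + fls_nth (phi f) (j + 1)" for j
      by (simp add: TT_nth fls_of_int_nth)
    show ?thesis
      using pCons.IH False unfolding d nth by auto
  qed
qed

lemma phi_inj_aux:
  assumes "phi f = of_nat p * H" "degree f \<le> d"
  shows "int p dvd coeff f i"
  using assms
proof (induction d arbitrary: f H i rule: less_induct)
  case (less d)
  show ?case
  proof (cases "f = 0")
    case True
    then show ?thesis by simp
  next
    case False
    let ?n = "degree f"
    let ?l = "lead_coeff f"
    have "?l = fls_nth (phi f) (int ?n)" using phi_top[of f] by simp
    also have "\<dots> = int p * fls_nth H (int ?n)" using less.prems(1)
      by (simp add: fls_of_nat_nth)
    finally obtain c where c: "?l = int p * c" by blast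
    define g where "g = f - smult ?l ([:0,1:] ^ ?n)"
    have cg: "coeff g i = coeff f i - (if i = ?n then ?l else 0)" for i
      by (simp add: g_def coeff_monom flip: monom_altdef)
    have pg: "phi g = of_nat p * (H - of_int c * TT ^ ?n)"
      using less.prems(1) by (simp add: g_def phi_smult c algebra_simps)
    have disj: "g = 0 \<or> degree g < ?n"
    proof (rule ccontr)
      assume "\<not> (g = 0 \<or> degree g < ?n)"
      moreover have "degree g \<le> ?n" unfolding g_def
        by (rule degree_diff_le) (auto simp: degree_smult_le degree_linear_power)
      ultimately have "degree g = ?n" "g \<noteq> 0" by auto
      then have "coeff g ?n \<noteq> 0" by (metis leading_coeff_0_iff)
      then show False using cg[of ?n] by simp
    qed
    from disj have "int p dvd coeff g i"
    proof
      assume "g = 0" then show ?thesis by simp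
    next
      assume dg: "degree g < ?n"
      show ?thesis
        by (rule less.IH[of "degree g"]) (use dg less.prems pg in auto)
    qed
    then show ?thesis using cg[of i] c by (auto split: if_splits)
  qed
qed

lemma phi_inj:
  assumes "phi f = of_nat p * H"
  shows "int p dvd coeff f i"
  using phi_inj_aux[OF assms order_refl] .

definition pc :: "nat \<Rightarrow> 'a::comm_ring_1 \<Rightarrow> 'a \<Rightarrow> bool" where
  "pc p a b \<longleftrightarrow> (\<exists>h. a - b = of_nat p * h)"

lemma pc_refl: "pc p a a" unfolding pc_def by (rule exI[of _ 0]) simp

lemma pc_trans: "pc p a b \<Longrightarrow> pc p b c \<Longrightarrow> pc p a c"
  unfolding pc_def by (metis diff_add_cancel distrib_left add_diff_eq diff_add_eq)

lemma pc_mult: "pc p a b \<Longrightarrow> pc p c d \<Longrightarrow> pc p (a * c) (b * d)"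
proof -
  assume "pc p a b" "pc p c d"
  then obtain h k where h: "a - b = of_nat p * h" and k: "c - d = of_nat p * k"
    unfolding pc_def by blast
  have "a * c - b * d = (a - b) * c + b * (c - d)" by (simp add: algebra_simps)
  also have "\<dots> = of_nat p * (h * c + b * k)" by (simp add: h k algebra_simps)
  finally show ?thesis unfolding pc_def by blast
qed

lemma pc_power: "pc p a b \<Longrightarrow> pc p (a ^ k) (b ^ k)"
  by (induction k) (simp_all add: pc_refl pc_mult)

lemma frob:
  fixes x y :: "'a::comm_ring_1"
  assumes "prime p"
  shows "pc p ((x + y) ^ p) (x ^ p + y ^ p)"
proof -
  have p0: "p > 0" using assms prime_gt_0_nat by blast
  define c where "c k = (if k = 0 \<or> k = p then 0 else (p choose k) div p)" for k
  have tm: "of_nat (p choose k) * x ^ k * y ^ (p - k)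
     = of_nat p * (of_nat (c k) * x ^ k * y ^ (p - k)) + (if k = 0 then y ^ p else 0)
        + (if k = p then x ^ p else 0)" if "k \<le> p" for k
  proof (cases "k = 0 \<or> k = p")
    case True
    then show ?thesis using p0 by (auto simp: c_def)
  next
    case False
    then have "p dvd (p choose k)" using that assms by (intro dvd_choose_prime) auto
    then have "p choose k = p * c k" using False by (simp add: c_def)
    then show ?thesis using False by (simp add: algebra_simps)
  qed
  have "(x + y) ^ p = (\<Sum>k\<le>p. of_nat (p choose k) * x ^ k * y ^ (p - k))"
    by (rule binomial_ring)
  also have "\<dots> = (\<Sum>k\<le>p. of_nat p * (of_nat (c k) * x ^ k * y ^ (p - k)) + (if k = 0 then y ^ p else 0)
        + (if k = p then x ^ p else 0))"
    by (rule sum.cong) (simp_all add: tm)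
  also have "\<dots> = of_nat p * (\<Sum>k\<le>p. of_nat (c k) * x ^ k * y ^ (p - k)) + y ^ p + x ^ p"
    by (simp add: sum.distrib sum_distrib_left)
  finally show ?thesis unfolding pc_def by (intro exI[of _ "\<Sum>k\<le>p. of_nat (c k) * x ^ k * y ^ (p - k)"]) (simp add: algebra_simps)
qed

lemma frob_iter:
  fixes x y :: "'a::comm_ring_1"
  assumes "prime p"
  shows "pc p ((x + y) ^ (p ^ n)) (x ^ (p ^ n) + y ^ (p ^ n))"
proof (induction n)
  case 0
  then show ?case by (simp add: pc_refl)
next
  case (Suc n)
  have "pc p (((x + y) ^ (p ^ n)) ^ p) ((x ^ (p ^ n) + y ^ (p ^ n)) ^ p)"
    by (rule pc_power[OF Suc])
  moreover have "pc p ((x ^ (p ^ n) + y ^ (p ^ n)) ^ p) ((x ^ (p ^ n)) ^ p + (y ^ (p ^ n)) ^ p)"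
    by (rule frob[OF assms])
  ultimately show ?case
    by (simp add: power_mult[symmetric] mult.commute pc_trans)
qed

lemma alg1:
  fixes X Y a b :: "'a::comm_ring_1"
  assumes "X * Y = 1" "a * b = 1"
  shows "(X * a) * (a - b + X * a - Y * b) = (X + 1) * (X * a * a - 1)"
proof -
  have "(X * a) * (a - b + X * a - Y * b) = (X + 1) * (X * a * a - 1) + X * (1 - a * b) + (1 - (X * Y) * (a * b))"
    by (simp add: algebra_simps)
  then show ?thesis using assms by simp
qed

lemma alg2:
  fixes X Y T :: "'a::comm_ring_1"
  assumes "X * Y = 1" "T = X + Y"
  shows "X * X * (T * T - 4) = (X - 1) * (X + 1) * (X * (X - Y))"
    and "X * (T - 2) = (X - 1) ^ 2"
proof -
  have "X * X * (T * T - 4) = (X - 1) * (X + 1) * (X * (X - Y)) + (X*Y - 1) * (3*X*X + X*Y)"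
    using assms(2) by (simp add: algebra_simps power2_eq_square)
  then show "X * X * (T * T - 4) = (X - 1) * (X + 1) * (X * (X - Y))" using assms by simp
  have "X * (T - 2) = (X - 1) ^ 2 + (X * Y - 1)"
    using assms(2) by (simp add: algebra_simps power2_eq_square)
  then show "X * (T - 2) = (X - 1) ^ 2" using assms by simp
qed

theorem corollary7p6:
  fixes p n q :: nat
  assumes "prime p" and "n \<ge> 1" and "q = p ^ n" and "odd q"
  shows "\<forall>i. [coeff (dicksonE ((q - 3) div 2) + dicksonE ((q - 1) div 2)) i
              = coeff ([:-2, 1:] ^ ((q - 1) div 2)) i] (mod int p)"
proof
  fix i
  define m where "m = (q - 1) div 2"
  have p2: "p \<ge> 2" using assms(1) prime_ge_2_nat by blast
  have "q \<ge> p" using assms(2,3) p2 by (metis One_nat_def le_add_diff_inverse power_increasing power_one_right not_one_le_zero le_less_trans less_one linorder_not_le nat_le_linear)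
  then have q3: "q \<ge> 3" using p2 assms(4) by (cases "q = 2") auto
  have qm: "q = 2 * m + 1" "m \<ge> 1" using q3 assms(4) unfolding m_def by (auto elim!: oddE)
  have m1: "(q - 3) div 2 = m - 1" using qm by simp
  define X :: "int fls" where "X = fls_X"
  define Y :: "int fls" where "Y = fls_X_inv"
  have XY1: "X * Y = 1" unfolding X_def Y_def by (rule XY)
  have ab: "X ^ m * Y ^ m = 1" unfolding X_def Y_def by (rule XYk)
  define D where "D = dicksonE (m - 1) + dicksonE m"
  define F where "F = D - [:-2, 1:] ^ m"
  define A where "A = phi D"
  define B where "B = phi ([:-2, 1:] ^ m)"
  have TT: "TT = X + Y" unfolding TT_def X_def Y_def ..
  have hB: "B = (TT - 2) ^ m" unfolding B_def by simp
  have hA: "(X - Y) * A = X ^ m - Y ^ m + X * X ^ m - Y * Y ^ m"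
  proof -
    have "(X - Y) * phi (dicksonE (m - 1)) = X ^ m - Y ^ m"
      using dickson_phi[of "m - 1"] qm unfolding X_def Y_def by simp
    moreover have "(X - Y) * phi (dicksonE m) = X * X ^ m - Y * Y ^ m"
      using dickson_phi[of m] unfolding X_def Y_def by simp
    moreover have "(X - Y) * A = (X - Y) * phi (dicksonE (m - 1)) + (X - Y) * phi (dicksonE m)"
      unfolding A_def D_def by (simp add: distrib_left)
    ultimately show ?thesis by simp
  qed
  have Xq: "X ^ q = X * X ^ m * X ^ m"
  proof -
    have "X ^ q = X ^ (m + m + 1)" using qm(1) by (simp add: mult_2)
    then show ?thesis by (simp only: power_add power_one_right mult_ac)
  qed
  have K1: "(X * X ^ m) * ((X - Y) * A) = (X + 1) * (X ^ q - 1)"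
    unfolding hA alg1[OF XY1 ab] Xq by (simp add: mult_ac)
  note K2 = alg2[OF XY1 TT]
  have K4: "X ^ m * (X * X * (TT * TT - 4)) * A = (X - 1) * (X + 1) * ((X + 1) * (X ^ q - 1))"
  proof -
    have "X ^ m * (X * X * (TT * TT - 4)) * A = (X - 1) * (X + 1) * ((X * X ^ m) * ((X - Y) * A))"
      unfolding K2(1) by (simp add: mult_ac)
    then show ?thesis unfolding K1 .
  qed
  have K5: "X ^ m * (X * X * (TT * TT - 4)) * B = (X + 1) ^ 2 * (X - 1) ^ (q + 1)"
  proof -
    have "X ^ m * B = (X - 1) ^ (2 * m)"
      unfolding hB by (simp add: K2(2) power_mult flip: power_mult_distrib)
    moreover have "X * X * (TT * TT - 4) = (X - 1) ^ 2 * (X + 1) ^ 2"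
      unfolding K2(1) by (simp add: XY1 right_diff_distrib power2_eq_square algebra_simps)
    ultimately show ?thesis using qm by (simp add: power_add power2_eq_square mult_ac)
  qed
  have K6: "pc p ((X - 1) ^ q) (X ^ q - 1)"
    using frob_iter[OF assms(1), of X "-1" n] assms(3,4) by simp
  have K7: "pc p (X ^ m * (X * X * (TT * TT - 4)) * (A - B)) 0"
  proof -
    have e: "X ^ m * (X * X * (TT * TT - 4)) * (A - B) = ((X - 1) * (X + 1) ^ 2) * (X ^ q - 1) - ((X - 1) * (X + 1) ^ 2) * (X - 1) ^ q"
    proof -
      have "X ^ m * (X * X * (TT * TT - 4)) * (A - B) = X ^ m * (X * X * (TT * TT - 4)) * A - X ^ m * (X * X * (TT * TT - 4)) * B"
        by (simp add: right_diff_distrib)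
      also have "\<dots> = (X - 1) * (X + 1) * ((X + 1) * (X ^ q - 1)) - (X + 1) ^ 2 * (X - 1) ^ (q + 1)"
        by (simp only: K4 K5)
      also have "\<dots> = ((X - 1) * (X + 1) ^ 2) * (X ^ q - 1) - ((X - 1) * (X + 1) ^ 2) * (X - 1) ^ q"
        by (simp add: power2_eq_square mult_ac)
      finally show ?thesis .
    qed
    from K6 obtain h where hh: "(X - 1) ^ q - (X ^ q - 1) = of_nat p * h" unfolding pc_def by blast
    then have "X ^ m * (X * X * (TT * TT - 4)) * (A - B) - 0 = of_nat p * (- ((X - 1) * (X + 1) ^ 2) * h)"
    proof -
      have "((X - 1) * (X + 1) ^ 2) * (X ^ q - 1) - ((X - 1) * (X + 1) ^ 2) * (X - 1) ^ q
          = - ((X - 1) * (X + 1) ^ 2) * ((X - 1) ^ q - (X ^ q - 1))"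
        by (simp add: algebra_simps)
      then have "X ^ m * (X * X * (TT * TT - 4)) * (A - B) - 0 = - ((X - 1) * (X + 1) ^ 2) * (of_nat p * h)"
        unfolding e hh by simp
      then show ?thesis by (simp add: algebra_simps)
    qed
    then show ?thesis unfolding pc_def by blast
  qed
  then obtain h where h: "X ^ m * (X * X * (TT * TT - 4)) * (A - B) = of_nat p * h"
    unfolding pc_def by auto
  have "(TT * TT - 4) * (A - B) = (Y ^ m * Y * Y) * (X ^ m * (X * X * (TT * TT - 4)) * (A - B))"
  proof -
    have "(Y ^ m * Y * Y) * (X ^ m * X * X) = 1"
      using ab XY1 by (simp add: mult_ac)
    moreover have "(Y ^ m * Y * Y) * (X ^ m * (X * X * (TT * TT - 4)) * (A - B))
       = ((Y ^ m * Y * Y) * (X ^ m * X * X)) * ((TT * TT - 4) * (A - B))"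
      by (simp only: mult_ac)
    ultimately show ?thesis by simp
  qed
  also have "\<dots> = of_nat p * (Y ^ m * Y * Y * h)" unfolding h by (simp add: mult_ac)
  finally have fin: "(TT * TT - 4) * (A - B) = of_nat p * (Y ^ m * Y * Y * h)" .
  have phig: "phi ([:-4, 0, 1:] * F) = of_nat p * (Y ^ m * Y * Y * h)"
  proof -
    have "phi [:-4, 0, 1:] = TT * TT - 4" by (simp add: algebra_simps)
    then have "phi ([:-4, 0, 1:] * F) = (TT * TT - 4) * (A - B)"
      unfolding F_def A_def B_def by (simp only: phi_mult phi_diff)
    then show ?thesis using fin by simp
  qed
  have "[:int p:] dvd [:-4, 0, 1:] * F"
    unfolding const_poly_dvd_iff using phi_inj[OF phig] by blast
  then have "int p dvd content ([:-4, 0, 1:] * F)" by (simp add: const_poly_dvd_iff_dvd_content)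
  moreover have "content [:-4, 0, 1::int:] = 1"
  proof -
    have "content [:-4, 0, 1::int:] dvd coeff [:-4, 0, 1::int:] 2" by (rule content_dvd_coeff)
    then have "is_unit (content [:-4, 0, 1::int:])" by (simp add: numeral_2_eq_2)
    then show ?thesis using is_unit_content_iff by blast
  qed
  ultimately have "int p dvd content F" by (simp only: content_mult mult_1_left)
  then have "[:int p:] dvd F" by (simp add: const_poly_dvd_iff_dvd_content)
  then have "int p dvd coeff F i" by (simp add: const_poly_dvd_iff)
  then show "[coeff (dicksonE ((q - 3) div 2) + dicksonE ((q - 1) div 2)) i
              = coeff ([:-2, 1:] ^ ((q - 1) div 2)) i] (mod int p)"
    unfolding cong_iff_dvd_diff m1 F_def D_def m_def[symmetric] by simp
qed

end
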